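(* Let $n\ge 5$ and $0\le p\le n-2$. Then every simplicial $p$-cycle $c$ (with integer coefficients) in $\Delta_n$ is homologous in $\Delta_n$ to a $p$-cycle $\tilde c$ all of whose simplices lie in $\partial(\Delta_n)$.
   Context: $\mathbb{I}_n$ is the $n$-dimensional hypercube graph on vertex set $\{0,1\}^n$ (adjacent iff differing in exactly one coordinate), with Hamming distance $d(v,w)=\#\{i: v(i)\ne w(i)\}$, $v(i)$ the $i$-th coordinate. $\Delta_n=\mathcal{VR}(\mathbb{I}_n;3)$ is the simplicial complex whose simplices are the subsets $\sigma\subseteq\{0,1\}^n$ with $d(x,y)\le 3$ for all $x,y\in\sigma$. For $i\in[n]$ and $\epsilon\in\{0,1\}$, $\mathbb{I}_n^{(i,\epsilon)}$ is the induced subgraph on $\{v: v(i)=\epsilon\}$ (isomorphic to $\mathbb{I}_{n-1}$), and $\partial(\Delta_n)=\bigcup_{i\in[n],\,\epsilon\in\{0,1\}}\mathcal{VR}(\mathbb{I}_n^{(i,\epsilon)};3)$, i.e. the subcomplex of simplices that do not cover all places (a simplex covers all places if for every $i$ it contains vertices with $i$-th coordinates $0$ and $1$). *)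

theory Defs
  imports Main
begin

definition cube_vertices :: "nat \<Rightarrow> bool list set" where
  "cube_vertices n = {v. length v = n}"

definition hamming :: "bool list \<Rightarrow> bool list \<Rightarrow> nat" where
  "hamming v w = card {i. i < length v \<and> v ! i \<noteq> w ! i}"

(* Delta_n = VR(I_n; 3): nonempty vertex sets of pairwise Hamming distance <= 3 *)
definition Delta :: "nat \<Rightarrow> bool list set set" where
  "Delta n = {\<sigma>. \<sigma> \<noteq> {} \<and> \<sigma> \<subseteq> cube_vertices n \<and>
                   (\<forall>x\<in>\<sigma>. \<forall>y\<in>\<sigma>. hamming x y \<le> 3)}"

(* boundary subcomplex: union of VR(I_n^(i,e);3) *)
definition partial_Delta :: "nat \<Rightarrow> bool list set set" where
  "partial_Delta n = {\<sigma> \<in> Delta n. \<exists>i<n. \<exists>e. \<forall>v\<in>\<sigma>. v ! i = e}"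

(* fixed total order on vertices (lexicographic, False < True), used to orient simplices *)
definition vless :: "bool list \<Rightarrow> bool list \<Rightarrow> bool" where
  "vless v w = (\<exists>i<length v. (\<forall>j<i. v ! j = w ! j) \<and> \<not> v ! i \<and> w ! i)"

(* simplicial p-chains with integer coefficients in complex K:
   finitely supported functions on p-simplices (sets of p+1 vertices) of K,
   each simplex oriented by the vertex order vless *)
definition is_chain :: "bool list set set \<Rightarrow> nat \<Rightarrow> (bool list set \<Rightarrow> int) \<Rightarrow> bool" where
  "is_chain K p c = (finite {\<sigma>. c \<sigma> \<noteq> 0} \<and>
      (\<forall>\<sigma>. c \<sigma> \<noteq> 0 \<longrightarrow> \<sigma> \<in> K \<and> card \<sigma> = p + 1))"

(* simplicial boundary: d[v_0<...<v_q] = sum_i (-1)^i [v_0,..,^v_i,..,v_q]; zero on 0-chains *)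
definition bd :: "(bool list set \<Rightarrow> int) \<Rightarrow> bool list set \<Rightarrow> int" where
  "bd c \<tau> = (if \<tau> = {} then 0 else
     (\<Sum>\<sigma>\<in>{\<sigma>. c \<sigma> \<noteq> 0}.
        if \<tau> \<subseteq> \<sigma> \<and> finite \<sigma> \<and> card \<sigma> = card \<tau> + 1
        then (-1) ^ card {w\<in>\<sigma>. vless w (the_elem (\<sigma> - \<tau>))} * c \<sigma>
        else 0))"

definition is_cycle :: "bool list set set \<Rightarrow> nat \<Rightarrow> (bool list set \<Rightarrow> int) \<Rightarrow> bool" where
  "is_cycle K p c = (is_chain K p c \<and> bd c = (\<lambda>_. 0))"

definition homologous :: "bool list set set \<Rightarrow> nat \<Rightarrow> (bool list set \<Rightarrow> int) \<Rightarrow> (bool list set \<Rightarrow> int) \<Rightarrow> bool" where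
  "homologous K p c c' = (\<exists>d. is_chain K (p + 1) d \<and> (\<forall>\<tau>. c \<tau> - c' \<tau> = bd d \<tau>))"

end

theory Submission
  imports Defs
begin


definition sg :: "bool list set \<Rightarrow> bool list set \<Rightarrow> int" where
  "sg \<sigma> \<tau> = (-1) ^ card {w\<in>\<sigma>. vless w (the_elem (\<sigma> - \<tau>))}"

definition ff :: "bool list set \<Rightarrow> bool list set \<Rightarrow> int" where
  "ff \<tau> \<sigma> = (if \<tau> \<subseteq> \<sigma> \<and> finite \<sigma> \<and> card \<sigma> = card \<tau> + 1 then sg \<sigma> \<tau> else 0)"

lemma bd_alt:
  assumes "finite F" "{\<sigma>. c \<sigma> \<noteq> 0} \<subseteq> F"
  shows "bd c \<tau> = (if \<tau> = {} then 0 else (\<Sum>\<sigma>\<in>F. ff \<tau> \<sigma> * c \<sigma>))"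
proof -
  have "(\<Sum>\<sigma>\<in>{\<sigma>. c \<sigma> \<noteq> 0}.
        if \<tau> \<subseteq> \<sigma> \<and> finite \<sigma> \<and> card \<sigma> = card \<tau> + 1
        then (-1) ^ card {w\<in>\<sigma>. vless w (the_elem (\<sigma> - \<tau>))} * c \<sigma>
        else 0) = (\<Sum>\<sigma>\<in>F. ff \<tau> \<sigma> * c \<sigma>)"
    by (rule sum.mono_neutral_cong_left) (use assms in \<open>auto simp: ff_def sg_def\<close>)
  then show ?thesis unfolding bd_def by simp
qed

lemma vless_irrefl: "\<not> vless a a"
  unfolding vless_def by auto

lemma vless_asym: assumes "vless a b" shows "\<not> vless b a"
proof
  assume "vless b a"
  from assms obtain i where i: "i < length a" "\<forall>j<i. a!j = b!j" "\<not> a!i" "b!i"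
    unfolding vless_def by blast
  from \<open>vless b a\<close> obtain k where k: "k < length b" "\<forall>j<k. b!j = a!j" "\<not> b!k" "a!k"
    unfolding vless_def by blast
  show False
  proof (cases i k rule: linorder_cases)
    case less then show ?thesis using i k by auto
  next
    case equal then show ?thesis using i k by auto
  next
    case greater then show ?thesis using i k by auto
  qed
qed

lemma vless_total:
  assumes "length a = length b" "a \<noteq> b" shows "vless a b \<or> vless b a"
proof -
  have "\<exists>i<length a. a!i \<noteq> b!i" using assms nth_equalityI by blast
  then obtain i where i: "i < length a" "a!i \<noteq> b!i" by blast
  define k where "k = (LEAST i. i < length a \<and> a!i \<noteq> b!i)"
  have k: "k < length a" "a!k \<noteq> b!k" using LeastI[of "\<lambda>i. i < length a \<and> a!i \<noteq> b!i", OF conjI[OF i]]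
    unfolding k_def by auto
  have lt: "\<forall>j<k. a!j = b!j"
  proof (intro allI impI)
    fix j assume "j < k"
    then show "a!j = b!j" using not_less_Least[of j "\<lambda>i. i < length a \<and> a!i \<noteq> b!i"] k(1)
      unfolding k_def by auto
  qed
  show ?thesis
  proof (cases "a!k")
    case True then show ?thesis using k lt assms(1) unfolding vless_def by (metis)
  next
    case False then show ?thesis using k lt assms(1) unfolding vless_def by (metis)
  qed
qed

lemma neg1_pow_cancel: "(L::nat) \<ge> 1 \<Longrightarrow> (-1::int)^K * (-1)^L + (-1)^(L - 1) * (-1)^K = 0"
proof -
  assume "L \<ge> 1"
  then obtain M where "L = Suc M" by (cases L) auto
  then show ?thesis by simp
qed

lemma bdbd_pair:
  assumes lt: "vless a b" and ab: "a \<noteq> b" and abS: "a \<in> \<sigma>" "b \<in> \<sigma>" and fin: "finite \<sigma>"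
    and \<tau>: "\<tau> = \<sigma> - {a, b}"
  shows "sg (\<sigma> - {b}) \<tau> * sg \<sigma> (\<sigma> - {b}) + sg (\<sigma> - {a}) \<tau> * sg \<sigma> (\<sigma> - {a}) = 0"
proof -
  have e1: "(\<sigma> - {b}) - \<tau> = {a}" using \<tau> ab abS by auto
  have e2: "\<sigma> - (\<sigma> - {b}) = {b}" using abS by auto
  have e3: "(\<sigma> - {a}) - \<tau> = {b}" using \<tau> ab abS by auto
  have e4: "\<sigma> - (\<sigma> - {a}) = {a}" using abS by auto
  have c1: "{w\<in>\<sigma> - {b}. vless w a} = {w\<in>\<sigma>. vless w a}" using vless_asym[OF lt] by auto
  have c2: "{w\<in>\<sigma> - {a}. vless w b} = {w\<in>\<sigma>. vless w b} - {a}" by auto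
  have c3: "card ({w\<in>\<sigma>. vless w b} - {a}) = card {w\<in>\<sigma>. vless w b} - 1"
    using lt abS fin by simp
  have c4: "card {w\<in>\<sigma>. vless w b} \<ge> 1"
  proof -
    have "a \<in> {w\<in>\<sigma>. vless w b}" using lt abS by simp
    then show ?thesis using fin by (metis (no_types, lifting) One_nat_def Suc_leI card_gt_0_iff empty_iff finite_subset mem_Collect_eq subsetI)
  qed
  show ?thesis unfolding sg_def e1 e2 e3 e4 the_elem_eq c1 c2 c3
    using neg1_pow_cancel[OF c4] by simp
qed



lemma sum_single_nz:
  assumes "finite F" "x \<in> F" "\<forall>y\<in>F. y \<noteq> x \<longrightarrow> g y = 0"
  shows "sum g F = g x"
proof -
  have "sum g F = g x + sum g (F - {x})" using assms by (simp add: sum.remove)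
  also have "sum g (F - {x}) = 0" using assms by (intro sum.neutral) auto
  finally show ?thesis by simp
qed

lemma bdbd_single:
  assumes fin: "finite \<sigma>" and ne: "\<tau> \<noteq> {}" and cv: "\<sigma> \<subseteq> cube_vertices n"
  shows "(\<Sum>\<rho>\<in>Pow \<sigma>. ff \<tau> \<rho> * ff \<rho> \<sigma>) = 0"
proof (cases "\<tau> \<subseteq> \<sigma> \<and> card \<sigma> = card \<tau> + 2")
  case False
  have "ff \<tau> \<rho> * ff \<rho> \<sigma> = 0" if "\<rho> \<in> Pow \<sigma>" for \<rho>
    using False that unfolding ff_def by (auto dest: subset_trans)
  then show ?thesis by (intro sum.neutral) blast
next
  case True
  have ft: "finite \<tau>" using True fin finite_subset by blast
  have "card (\<sigma> - \<tau>) = 2" using True ft by (simp add: card_Diff_subset)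
  then obtain a b where ab: "\<sigma> - \<tau> = {a, b}" "a \<noteq> b" by (auto simp: card_Suc_eq numeral_2_eq_2)
  have abS: "a \<in> \<sigma>" "b \<in> \<sigma>" "a \<notin> \<tau>" "b \<notin> \<tau>" using ab by auto
  have \<tau>eq: "\<tau> = \<sigma> - {a, b}" using ab True by auto
  have la: "length a = length b" using abS cv unfolding cube_vertices_def by auto
  have ne2: "\<sigma> - {b} \<noteq> \<sigma> - {a}" using abS ab by auto
  have zero: "ff \<tau> \<rho> * ff \<rho> \<sigma> = 0" if "\<rho> \<in> Pow \<sigma>" "\<rho> \<notin> {\<sigma> - {b}, \<sigma> - {a}}" for \<rho>
  proof (rule ccontr)
    assume nz: "ff \<tau> \<rho> * ff \<rho> \<sigma> \<noteq> 0"
    then have h: "\<tau> \<subseteq> \<rho>" "\<rho> \<subseteq> \<sigma>" "card \<rho> = card \<tau> + 1" "card \<sigma> = card \<rho> + 1"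
      unfolding ff_def by (auto split: if_splits)
    have fr: "finite \<rho>" using h fin finite_subset by blast
    have "card (\<sigma> - \<rho>) = 1" using h fr by (simp add: card_Diff_subset)
    then obtain x where x: "\<sigma> - \<rho> = {x}" by (auto simp: card_Suc_eq)
    have "x \<in> {a, b}" using x h \<tau>eq by auto
    then have "\<rho> = \<sigma> - {b} \<or> \<rho> = \<sigma> - {a}" using x h by auto
    then show False using that by auto
  qed
  have "(\<Sum>\<rho>\<in>Pow \<sigma>. ff \<tau> \<rho> * ff \<rho> \<sigma>) = (\<Sum>\<rho>\<in>{\<sigma> - {b}, \<sigma> - {a}}. ff \<tau> \<rho> * ff \<rho> \<sigma>)"
    using zero fin by (intro sum.mono_neutral_right) auto
  also have "\<dots> = ff \<tau> (\<sigma> - {b}) * ff (\<sigma> - {b}) \<sigma> + ff \<tau> (\<sigma> - {a}) * ff (\<sigma> - {a}) \<sigma>"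
    using ne2 by simp
  also have "\<dots> = sg (\<sigma> - {b}) \<tau> * sg \<sigma> (\<sigma> - {b}) + sg (\<sigma> - {a}) \<tau> * sg \<sigma> (\<sigma> - {a})"
  proof -
    have "card (\<sigma> - {b}) = card \<tau> + 1" "card (\<sigma> - {a}) = card \<tau> + 1"
      using True abS fin by auto
    moreover have "card \<sigma> = card (\<sigma> - {b}) + 1" "card \<sigma> = card (\<sigma> - {a}) + 1"
      using True abS fin by auto
    ultimately show ?thesis unfolding ff_def using \<tau>eq fin by auto
  qed
  also have "\<dots> = 0"
  proof (cases "vless a b")
    case True then show ?thesis using bdbd_pair[OF True ab(2) abS(1,2) fin \<tau>eq] by simp
  next
    case False
    then have "vless b a" using vless_total[OF la ab(2)] by auto
    moreover have "\<tau> = \<sigma> - {b, a}" using \<tau>eq by auto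
    ultimately show ?thesis using bdbd_pair[of b a \<sigma> \<tau>] ab abS fin by auto
  qed
  finally show ?thesis .
qed

lemma bd_nz:
  assumes "bd d \<tau> \<noteq> 0"
  shows "\<tau> \<noteq> {} \<and> (\<exists>\<rho>. d \<rho> \<noteq> 0 \<and> \<tau> \<subseteq> \<rho> \<and> finite \<rho> \<and> card \<rho> = card \<tau> + 1)"
proof -
  have "\<tau> \<noteq> {}" using assms unfolding bd_def by auto
  moreover
  define g where "g = (\<lambda>\<rho>. if \<tau> \<subseteq> \<rho> \<and> finite \<rho> \<and> card \<rho> = card \<tau> + 1
        then (-1) ^ card {w\<in>\<rho>. vless w (the_elem (\<rho> - \<tau>))} * d \<rho> else (0::int))"
  have "sum g {\<sigma>. d \<sigma> \<noteq> 0} \<noteq> 0" using assms \<open>\<tau> \<noteq> {}\<close> unfolding bd_def g_def by simp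
  then obtain \<rho> where "\<rho> \<in> {\<sigma>. d \<sigma> \<noteq> 0}" "g \<rho> \<noteq> 0"
    using sum.not_neutral_contains_not_neutral by blast
  ultimately show ?thesis unfolding g_def by (auto split: if_splits)
qed

lemma bdbd:
  assumes fin: "finite {\<sigma>. d \<sigma> \<noteq> 0}" and sup: "\<forall>\<sigma>. d \<sigma> \<noteq> 0 \<longrightarrow> finite \<sigma> \<and> \<sigma> \<subseteq> cube_vertices n"
  shows "bd (bd d) \<tau> = 0"
proof (cases "\<tau> = {}")
  case True then show ?thesis unfolding bd_def by simp
next
  case ne: False
  define H where "H = {\<sigma>. d \<sigma> \<noteq> 0}"
  define G where "G = (\<Union>\<sigma>\<in>H. Pow \<sigma>)"
  have fH: "finite H" using fin H_def by simp
  have fG: "finite G" unfolding G_def using fH sup H_def by auto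
  have sG: "{\<rho>. bd d \<rho> \<noteq> 0} \<subseteq> G"
  proof
    fix \<rho> assume "\<rho> \<in> {\<rho>. bd d \<rho> \<noteq> 0}"
    then show "\<rho> \<in> G" using bd_nz[of d \<rho>] unfolding G_def H_def by auto
  qed
  have "bd (bd d) \<tau> = (\<Sum>\<rho>\<in>G. ff \<tau> \<rho> * bd d \<rho>)"
    using bd_alt[OF fG sG] ne by simp
  also have "\<dots> = (\<Sum>\<rho>\<in>G. \<Sum>\<sigma>\<in>H. ff \<tau> \<rho> * (ff \<rho> \<sigma> * d \<sigma>))"
  proof (rule sum.cong[OF refl])
    fix \<rho> assume "\<rho> \<in> G"
    show "ff \<tau> \<rho> * bd d \<rho> = (\<Sum>\<sigma>\<in>H. ff \<tau> \<rho> * (ff \<rho> \<sigma> * d \<sigma>))"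
    proof (cases "\<rho> = {}")
      case True then show ?thesis using ne unfolding ff_def by simp
    next
      case False
      then show ?thesis using bd_alt[OF fH, of d \<rho>] unfolding H_def
        by (simp add: sum_distrib_left)
    qed
  qed
  also have "\<dots> = (\<Sum>\<sigma>\<in>H. \<Sum>\<rho>\<in>G. ff \<tau> \<rho> * (ff \<rho> \<sigma> * d \<sigma>))"
    by (rule sum.swap)
  also have "\<dots> = (\<Sum>\<sigma>\<in>H. d \<sigma> * (\<Sum>\<rho>\<in>Pow \<sigma>. ff \<tau> \<rho> * ff \<rho> \<sigma>))"
  proof (rule sum.cong[OF refl])
    fix \<sigma> assume sH: "\<sigma> \<in> H"
    have "(\<Sum>\<rho>\<in>G. ff \<tau> \<rho> * (ff \<rho> \<sigma> * d \<sigma>)) = (\<Sum>\<rho>\<in>Pow \<sigma>. ff \<tau> \<rho> * (ff \<rho> \<sigma> * d \<sigma>))"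
      using fG sH unfolding G_def by (intro sum.mono_neutral_right) (auto simp: ff_def)
    then show "(\<Sum>\<rho>\<in>G. ff \<tau> \<rho> * (ff \<rho> \<sigma> * d \<sigma>)) = d \<sigma> * (\<Sum>\<rho>\<in>Pow \<sigma>. ff \<tau> \<rho> * ff \<rho> \<sigma>)"
      by (simp add: sum_distrib_left algebra_simps)
  qed
  also have "\<dots> = 0"
    using bdbd_single[OF _ ne] sup unfolding H_def by (intro sum.neutral) auto
  finally show ?thesis .
qed

lemma bd_diff:
  assumes "finite {\<sigma>. a \<sigma> \<noteq> 0}" "finite {\<sigma>. b \<sigma> \<noteq> 0}"
  shows "bd (\<lambda>x. a x - b x) \<tau> = bd a \<tau> - bd b \<tau>"
proof -
  let ?F = "{\<sigma>. a \<sigma> \<noteq> 0} \<union> {\<sigma>. b \<sigma> \<noteq> 0}"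
  have f: "finite ?F" using assms by simp
  have s1: "{\<sigma>. a \<sigma> - b \<sigma> \<noteq> 0} \<subseteq> ?F" by auto
  have s2: "{\<sigma>. a \<sigma> \<noteq> 0} \<subseteq> ?F" "{\<sigma>. b \<sigma> \<noteq> 0} \<subseteq> ?F" by auto
  show ?thesis
  proof (cases "\<tau> = {}")
    case True then show ?thesis unfolding bd_def by simp
  next
    case False
    have "(\<Sum>\<sigma>\<in>?F. ff \<tau> \<sigma> * (a \<sigma> - b \<sigma>)) = (\<Sum>\<sigma>\<in>?F. ff \<tau> \<sigma> * a \<sigma>) - (\<Sum>\<sigma>\<in>?F. ff \<tau> \<sigma> * b \<sigma>)"
      by (simp add: right_diff_distrib sum_subtractf)
    then show ?thesis
      using bd_alt[OF f s1, of \<tau>] bd_alt[OF f s2(1), of \<tau>] bd_alt[OF f s2(2), of \<tau>] False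
      by simp
  qed
qed



definition cov :: "nat \<Rightarrow> bool list set \<Rightarrow> bool" where
  "cov n \<sigma> = (\<forall>i<n. \<forall>e. \<exists>v\<in>\<sigma>. v!i \<noteq> e)"

definition sdf :: "nat set \<Rightarrow> nat set \<Rightarrow> nat set" where
  "sdf X Y = X - Y \<union> (Y - X)"

lemma covD: assumes "cov n S" "i < n" shows "\<exists>v\<in>S. v!i \<noteq> e"
  using assms unfolding cov_def by blast

lemma sd_bound:
  assumes "finite A" "finite B" "card B \<le> card A"
  shows "2 * card (B - A) \<le> card (sdf A B)"
proof -
  have "card (sdf A B) = card (A - B) + card (B - A)"
    unfolding sdf_def using assms by (intro card_Un_disjoint) auto
  moreover have "card (A - B) = card A - card (A \<inter> B)" using assms by (simp add: card_Diff_subset_Int)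
  moreover have "card (B - A) = card B - card (A \<inter> B)" using assms
    by (simp add: card_Diff_subset_Int Int_commute)
  moreover have "card (A \<inter> B) \<le> card B" using assms by (simp add: card_mono)
  ultimately show ?thesis using assms(3) by linarith
qed

lemma finite_cube: "finite (cube_vertices n)"
proof -
  have "cube_vertices n = {xs. set xs \<subseteq> (UNIV::bool set) \<and> length xs = n}"
    unfolding cube_vertices_def by auto
  then show ?thesis using finite_lists_length_eq[of "UNIV::bool set" n] by simp
qed

lemma hamming_D:
  assumes "length x = n" "length y = n"
  shows "hamming x y = card (sdf {i. i < n \<and> x!i \<noteq> z!i} {i. i < n \<and> y!i \<noteq> z!i})"
proof -
  have "{i. i < length x \<and> x!i \<noteq> y!i} = sdf {i. i < n \<and> x!i \<noteq> z!i} {i. i < n \<and> y!i \<noteq> z!i}"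
    unfolding sdf_def using assms by auto
  then show ?thesis unfolding hamming_def by simp
qed

lemma cone_exists:
  assumes n5: "n \<ge> 5" and sD: "\<sigma> \<in> Delta n" and cv: "cov n \<sigma>" and cs: "card \<sigma> \<le> n - 1"
  shows "\<exists>w. length w = n \<and> w \<notin> \<sigma> \<and> insert w \<sigma> \<in> Delta n \<and> (\<forall>y\<in>\<sigma>. \<not> cov n (insert w \<sigma> - {y}))"
proof -
  have sub: "\<sigma> \<subseteq> cube_vertices n" and ne: "\<sigma> \<noteq> {}" and hm: "\<forall>x\<in>\<sigma>. \<forall>y\<in>\<sigma>. hamming x y \<le> 3"
    using sD unfolding Delta_def by auto
  have fin: "finite \<sigma>" using sub finite_cube finite_subset by blast
  have len: "\<And>v. v \<in> \<sigma> \<Longrightarrow> length v = n" using sub unfolding cube_vertices_def by auto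
  obtain x0 where x0: "x0 \<in> \<sigma>" using ne by blast
  define D where "D x = {i. i < n \<and> x!i \<noteq> x0!i}" for x
  have finD: "finite (D x)" for x unfolding D_def by simp
  have Dlt: "i \<in> D x \<Longrightarrow> i < n" for i x unfolding D_def by simp
  have hD: "card (sdf (D x) (D y)) \<le> 3" if x: "x \<in> \<sigma>" and y: "y \<in> \<sigma>" for x y
  proof -
    have "hamming x y = card (sdf (D x) (D y))"
      using hamming_D[OF len[OF x] len[OF y], of x0] unfolding D_def by simp
    then show ?thesis using hm x y by metis
  qed
  have D0: "D x0 = {}" unfolding D_def by simp
  have sdf0: "sdf X {} = X" for X unfolding sdf_def by simp
  have cD: "card (D x) \<le> 3" if x: "x \<in> \<sigma>" for x
    using hD[OF x x0] by (simp add: D0 sdf0)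
  have nth_D: "\<And>v i. i < n \<Longrightarrow> v!i = (if i \<in> D v then \<not> x0!i else x0!i)"
    unfolding D_def by auto
  have cover: "\<And>i. i < n \<Longrightarrow> \<exists>x\<in>\<sigma>. i \<in> D x"
    using cv unfolding cov_def D_def by blast
  define m where "m = Max ((\<lambda>x. card (D x)) ` \<sigma>)"
  have "m \<in> (\<lambda>x. card (D x)) ` \<sigma>" unfolding m_def using fin ne by simp
  then obtain x1 where x1: "x1 \<in> \<sigma>" "card (D x1) = m" by blast
  have x1max: "\<And>x. x \<in> \<sigma> \<Longrightarrow> card (D x) \<le> card (D x1)" using fin x1 unfolding m_def by simp
  define A where "A = D x1"
  have finA: "finite A" unfolding A_def by (rule finD)
  have out1: "\<And>x. x \<in> \<sigma> \<Longrightarrow> card (D x - A) \<le> 1"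
  proof -
    fix x assume x: "x \<in> \<sigma>"
    have "2 * card (D x - A) \<le> card (sdf A (D x))"
      using sd_bound[OF finA finD] x1max[OF x] unfolding A_def by blast
    moreover have "card (sdf A (D x)) \<le> 3" using hD[OF x1(1) x] unfolding A_def .
    ultimately show "card (D x - A) \<le> 1" by linarith
  qed
  have x10: "x1 \<noteq> x0"
  proof
    assume "x1 = x0"
    then have "D x = {}" if x: "x \<in> \<sigma>" for x
    proof -
      have "card (D x) = 0" using x1max[OF x] \<open>x1 = x0\<close> D0 by simp
      then show ?thesis using finD by simp
    qed
    then show False using cover[of 0] n5 by auto
  qed
  define R where "R = \<sigma> - {x0, x1}"
  have finR: "finite R" unfolding R_def using fin by simp
  have cR: "card R = card \<sigma> - 2" unfolding R_def using x0 x1 x10 fin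
    by (simp add: card_Diff_subset)
  have sigR: "\<sigma> = insert x0 (insert x1 R)" unfolding R_def using x0 x1 by auto
  have cov2: "{..<n} \<subseteq> A \<union> (\<Union>x\<in>S. D x - A)" if "R \<subseteq> S" for S
  proof
    fix i assume "i \<in> {..<n}"
    then obtain x where x: "x \<in> \<sigma>" "i \<in> D x" using cover by auto
    then show "i \<in> A \<union> (\<Union>x\<in>S. D x - A)" using sigR D0 that unfolding A_def by auto
  qed
  have cardbound: "n \<le> card A + card S" if "R \<subseteq> S" "S \<subseteq> R" for S
  proof -
    have fS: "finite S" using that finR finite_subset by blast
    have "n = card {..<n}" by simp
    also have "\<dots> \<le> card (A \<union> (\<Union>x\<in>S. D x - A))"
      using cov2[OF that(1)] finA finD fS by (intro card_mono) auto
    also have "\<dots> \<le> card A + card (\<Union>x\<in>S. D x - A)" by (rule card_Un_le)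
    also have "card (\<Union>x\<in>S. D x - A) \<le> (\<Sum>x\<in>S. card (D x - A))" using fS by (rule card_UN_le)
    also have "\<dots> \<le> (\<Sum>x\<in>S. 1)" using out1 that sigR by (intro sum_mono) auto
    finally show ?thesis by simp
  qed
  have cA3: "card A \<le> 3" unfolding A_def using cD[OF x1(1)] .
  have s2: "card \<sigma> \<ge> 2"
  proof -
    have "card {x0, x1} \<le> card \<sigma>" using x0 x1 fin by (intro card_mono) auto
    then show ?thesis using x10 by simp
  qed
  have cA: "card A = 3" and cRn: "card R = n - 3"
    using cardbound[of R] cR cs cA3 s2 by auto
  have priv: "\<forall>x\<in>R. \<exists>e. e \<in> D x \<and> e \<notin> A \<and> (\<forall>y\<in>R. y \<noteq> x \<longrightarrow> e \<notin> D y)"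
  proof (rule ccontr)
    assume "\<not> ?thesis"
    then obtain x where x: "x \<in> R" and np: "\<forall>e. e \<in> D x \<and> e \<notin> A \<longrightarrow> (\<exists>y\<in>R. y \<noteq> x \<and> e \<in> D y)"
      by blast
    have "{..<n} \<subseteq> A \<union> (\<Union>y\<in>R - {x}. D y - A)"
    proof
      fix i assume "i \<in> {..<n}"
      then have "i \<in> A \<union> (\<Union>x\<in>R. D x - A)" using cov2[of R] by auto
      then show "i \<in> A \<union> (\<Union>y\<in>R - {x}. D y - A)" using np by auto
    qed
    moreover have "finite (A \<union> (\<Union>y\<in>R - {x}. D y - A))" using finA finD finR by simp
    ultimately have "card {..<n} \<le> card (A \<union> (\<Union>y\<in>R - {x}. D y - A))"
      by (intro card_mono)
    then have "n \<le> card (A \<union> (\<Union>y\<in>R - {x}. D y - A))" by simp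
    also have "\<dots> \<le> card A + card (\<Union>y\<in>R - {x}. D y - A)" by (rule card_Un_le)
    also have "card (\<Union>y\<in>R - {x}. D y - A) \<le> (\<Sum>y\<in>R - {x}. card (D y - A))" using finR by (intro card_UN_le) simp
    also have "\<dots> \<le> (\<Sum>y\<in>R - {x}. 1)" using out1 sigR by (intro sum_mono) auto
    finally have "n \<le> card A + card (R - {x})" by simp
    then show False using cA cRn x finR n5 by simp
  qed
  obtain e where eall: "\<forall>x\<in>R. e x \<in> D x \<and> e x \<notin> A \<and> (\<forall>y\<in>R. y \<noteq> x \<longrightarrow> e x \<notin> D y)"
    using bchoice[OF priv] by blast
  have e: "\<And>x. x \<in> R \<Longrightarrow> e x \<in> D x" "\<And>x. x \<in> R \<Longrightarrow> e x \<notin> A"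
    "\<And>x y. x \<in> R \<Longrightarrow> y \<in> R \<Longrightarrow> y \<noteq> x \<Longrightarrow> e x \<notin> D y"
    using eall by auto
  have Rs: "R \<subseteq> \<sigma>" unfolding R_def by auto
  have DA: "\<And>x. x \<in> R \<Longrightarrow> D x - A = {e x}"
  proof -
    fix x assume x: "x \<in> R"
    have "e x \<in> D x - A" using e x by auto
    moreover have "card (D x - A) \<le> 1" using out1 x sigR by auto
    moreover have "finite (D x - A)" using finD by simp
    ultimately show "D x - A = {e x}" using card_le_Suc0_iff_eq[of "D x - A"] by auto
  qed
  define C where "C x = D x \<inter> A" for x
  have finC: "finite (C x)" for x unfolding C_def using finA by simp
  have CA: "C x \<subseteq> A" for x unfolding C_def by auto
  have DC: "\<And>x. x \<in> R \<Longrightarrow> D x = insert (e x) (C x)" using DA unfolding C_def by blast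
  have ecC: "\<And>x y. x \<in> R \<Longrightarrow> e x \<notin> C y" using e CA by blast
  have CC: "\<And>x y. x \<in> R \<Longrightarrow> y \<in> R \<Longrightarrow> card (sdf (C x) (C y)) \<le> 1"
  proof -
    fix x y assume x: "x \<in> R" and y: "y \<in> R"
    show "card (sdf (C x) (C y)) \<le> 1"
    proof (cases "x = y")
      case True then show ?thesis unfolding sdf_def by simp
    next
      case False
      have exy: "e x \<noteq> e y"
      proof
        assume eq: "e x = e y"
        have "y \<noteq> x" using False by simp
        then have "e x \<notin> D y" using e(3)[OF x y] by blast
        then show False using e(1)[OF y] eq by simp
      qed
      have "sdf (D x) (D y) = insert (e x) (insert (e y) (sdf (C x) (C y)))"
        unfolding sdf_def using DC[OF x] DC[OF y] e(3)[OF x y] e(3)[OF y x] False exy ecC x y by auto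
      moreover have "e x \<notin> insert (e y) (sdf (C x) (C y))" "e y \<notin> sdf (C x) (C y)"
        using exy ecC x y unfolding sdf_def by auto
      moreover have "finite (sdf (C x) (C y))" unfolding sdf_def using finC by simp
      ultimately have "card (sdf (D x) (D y)) = card (sdf (C x) (C y)) + 2" by simp
      moreover have "card (sdf (D x) (D y)) \<le> 3" using hD x y Rs by auto
      ultimately show ?thesis by linarith
    qed
  qed
  have C1: "\<And>x. x \<in> R \<Longrightarrow> card (C x) \<ge> 1"
  proof -
    fix x assume x: "x \<in> R"
    have "sdf A (D x) = insert (e x) (A - C x)" unfolding sdf_def C_def using DA[OF x] by auto
    moreover have "e x \<notin> A - C x" using e x by auto
    ultimately have "card (sdf A (D x)) = card (A - C x) + 1" using finA by simp
    moreover have "card (A - C x) = 3 - card (C x)" using cA CA finC finA by (simp add: card_Diff_subset)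
    moreover have "card (sdf A (D x)) \<le> 3" using hD[OF x1(1)] x sigR unfolding A_def by auto
    moreover have "card (C x) \<le> 3" using card_mono[OF finA CA[of x]] cA by simp
    ultimately show "card (C x) \<ge> 1" by linarith
  qed
  have C2: "\<And>x. x \<in> R \<Longrightarrow> card (C x) \<le> 2"
  proof -
    fix x assume x: "x \<in> R"
    have "card (D x) = card (C x) + 1" using DC[OF x] ecC[OF x] finC by simp
    then show "card (C x) \<le> 2" using cD x sigR by fastforce
  qed
  have Rne: "R \<noteq> {}" using cRn n5 by auto
  define mx where "mx = Max ((\<lambda>x. card (C x)) ` R)"
  have "mx \<in> (\<lambda>x. card (C x)) ` R" unfolding mx_def using finR Rne by simp
  then obtain M where M: "M \<in> R" "card (C M) = mx" by blast
  have Mmax: "\<And>x. x \<in> R \<Longrightarrow> card (C x) \<le> card (C M)" using finR M unfolding mx_def by simp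
  define mn where "mn = Min ((\<lambda>x. card (C x)) ` R)"
  have "mn \<in> (\<lambda>x. card (C x)) ` R" unfolding mn_def using finR Rne by simp
  then obtain N where N: "N \<in> R" "card (C N) = mn" by blast
  have Nmin: "\<And>x. x \<in> R \<Longrightarrow> card (C N) \<le> card (C x)" using finR N unfolding mn_def by simp
  have subM: "\<And>y. y \<in> R \<Longrightarrow> C y \<subseteq> C M"
  proof -
    fix y assume y: "y \<in> R"
    have "2 * card (C y - C M) \<le> card (sdf (C M) (C y))" using sd_bound[OF finC finC Mmax[OF y]] .
    moreover have "card (sdf (C M) (C y)) \<le> 1" using CC M y by blast
    ultimately have "card (C y - C M) = 0" by linarith
    then show "C y \<subseteq> C M" using finC by auto
  qed
  have subN: "\<And>y. y \<in> R \<Longrightarrow> C N \<subseteq> C y"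
  proof -
    fix y assume y: "y \<in> R"
    have "2 * card (C N - C y) \<le> card (sdf (C y) (C N))" using sd_bound[OF finC finC Nmin[OF y]] .
    moreover have "card (sdf (C y) (C N)) \<le> 1" using CC N y by blast
    ultimately have "card (C N - C y) = 0" by linarith
    then show "C N \<subseteq> C y" using finC by auto
  qed
  obtain a where a: "a \<in> C N" using C1[OF N(1)] by fastforce
  have "\<not> A \<subseteq> C M"
  proof
    assume "A \<subseteq> C M"
    then have "card A \<le> card (C M)" using finC by (rule card_mono[rotated])
    then show False using C2[OF M(1)] cA by simp
  qed
  then obtain c where c: "c \<in> A" "c \<notin> C M" by blast
  have aA: "a \<in> A" using a CA by blast
  have an: "a < n" using aA Dlt unfolding A_def by blast
  have cn: "c < n" using c Dlt unfolding A_def by blast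
  have aR: "\<And>y. y \<in> R \<Longrightarrow> a \<in> D y" using a subN unfolding C_def by blast
  have cR: "\<And>y. y \<in> R \<Longrightarrow> c \<notin> D y" using c subM unfolding C_def by blast
  have ac: "a \<noteq> c" using a c subN[OF M(1)] by blast
  have x0n: "length x0 = n" using len x0 .
  define w where "w = x0[a := \<not> x0!a]"
  have lw: "length w = n" unfolding w_def using x0n by simp
  have nw: "\<And>i. w!i = (if i = a then \<not> x0!a else x0!i)" unfolding w_def using x0n an by simp
  have Dw: "D w = {a}" unfolding D_def using nw an by auto
  have aD: "\<And>v. v \<in> \<sigma> \<Longrightarrow> a \<in> D v \<or> v = x0"
    using sigR aR aA unfolding A_def by auto
  have wns: "w \<notin> \<sigma>"
  proof
    assume ws: "w \<in> \<sigma>"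
    have "w \<noteq> x0" using Dw D0 by auto
    moreover have "w \<noteq> x1" using Dw cA unfolding A_def by auto
    moreover have "w \<notin> R"
    proof
      assume wR: "w \<in> R"
      then have "e w = a" using e(1)[OF wR] Dw by simp
      then show False using e(2)[OF wR] aA by simp
    qed
    ultimately show False using ws sigR by auto
  qed
  have hw: "\<And>v. v \<in> \<sigma> \<Longrightarrow> card (sdf (D w) (D v)) \<le> 3 \<and> card (sdf (D v) (D w)) \<le> 3"
  proof -
    fix v assume v: "v \<in> \<sigma>"
    have eq: "sdf (D v) (D w) = sdf (D w) (D v)" unfolding sdf_def by auto
    from aD[OF v] show "card (sdf (D w) (D v)) \<le> 3 \<and> card (sdf (D v) (D w)) \<le> 3"
    proof
      assume "a \<in> D v"
      then have "sdf (D w) (D v) = D v - {a}" unfolding sdf_def Dw by auto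
      then have "card (sdf (D w) (D v)) \<le> card (D v)" using finD by (simp add: card_mono)
      then show ?thesis using cD[OF v] eq by simp
    next
      assume "v = x0"
      then show ?thesis using eq Dw D0 unfolding sdf_def by simp
    qed
  qed
  have wD: "insert w \<sigma> \<in> Delta n"
  proof -
    have "\<forall>x\<in>insert w \<sigma>. \<forall>y\<in>insert w \<sigma>. hamming x y \<le> 3"
    proof (intro ballI)
      fix x y assume x: "x \<in> insert w \<sigma>" and y: "y \<in> insert w \<sigma>"
      have lx: "length x = n" "length y = n" using x y len lw by auto
      have "hamming x y = card (sdf (D x) (D y))" using hamming_D[OF lx, of x0] unfolding D_def by simp
      moreover have "card (sdf (D x) (D y)) \<le> 3"
        using x y hD hw by (auto simp: sdf_def)
      ultimately show "hamming x y \<le> 3" by simp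
    qed
    then show ?thesis using sub lw unfolding Delta_def cube_vertices_def by auto
  qed
  have facets: "\<forall>y\<in>\<sigma>. \<not> cov n (insert w \<sigma> - {y})"
  proof
    fix y assume y: "y \<in> \<sigma>"
    have "y = x0 \<or> y = x1 \<or> y \<in> R" using y sigR by auto
    then show "\<not> cov n (insert w \<sigma> - {y})"
    proof (elim disjE)
      assume yy: "y = x0"
      have H: "\<forall>v\<in>insert w \<sigma> - {y}. v!a = (\<not> x0!a)"
      proof
        fix v assume v: "v \<in> insert w \<sigma> - {y}"
        show "v!a = (\<not> x0!a)"
        proof (cases "v = w")
          case True then show ?thesis using nw by simp
        next
          case False then have "a \<in> D v" using v aD yy by auto
          then show ?thesis using nth_D[OF an] by simp
        qed
      qed
      show ?thesis
      proof
        assume "cov n (insert w \<sigma> - {y})"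
        then obtain v where v: "v \<in> insert w \<sigma> - {y}" and nv: "v!a \<noteq> (\<not> x0!a)"
          using covD[OF _ an, where e="(\<not> x0!a)"] by blast
        then show False using H[rule_format, OF v] by simp
      qed
    next
      assume yy: "y = x1"
      have H: "\<forall>v\<in>insert w \<sigma> - {y}. v!c = x0!c"
      proof
        fix v assume v: "v \<in> insert w \<sigma> - {y}"
        show "v!c = x0!c"
        proof (cases "v = w")
          case True then show ?thesis using nw ac by simp
        next
          case False then have "v = x0 \<or> v \<in> R" using v yy sigR by auto
          then have "c \<notin> D v" using cR D0 by auto
          then show ?thesis using nth_D[OF cn] by simp
        qed
      qed
      show ?thesis
      proof
        assume "cov n (insert w \<sigma> - {y})"
        then obtain v where v: "v \<in> insert w \<sigma> - {y}" and nv: "v!c \<noteq> x0!c"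
          using covD[OF _ cn, where e="x0!c"] by blast
        then show False using H[rule_format, OF v] by simp
      qed
    next
      assume yR: "y \<in> R"
      have en: "e y < n" using e(1)[OF yR] Dlt by blast
      have ea: "e y \<noteq> a" using e(2)[OF yR] aA by blast
      have H: "\<forall>v\<in>insert w \<sigma> - {y}. v!(e y) = x0!(e y)"
      proof
        fix v assume v: "v \<in> insert w \<sigma> - {y}"
        show "v!(e y) = x0!(e y)"
        proof (cases "v = w")
          case True then show ?thesis using nw ea by simp
        next
          case False then have "v = x0 \<or> v = x1 \<or> (v \<in> R \<and> v \<noteq> y)" using v sigR by auto
          then have "e y \<notin> D v" using D0 e yR unfolding A_def by auto
          then show ?thesis using nth_D[OF en] by simp
        qed
      qed
      show ?thesis
      proof
        assume "cov n (insert w \<sigma> - {y})"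
        then obtain v where v: "v \<in> insert w \<sigma> - {y}" and nv: "v!(e y) \<noteq> x0!(e y)"
          using covD[OF _ en, where e="x0!(e y)"] by blast
        then show False using H[rule_format, OF v] by simp
      qed
    qed
  qed
  show ?thesis using lw wns wD facets by blast
qed



lemma sg_sq: "sg \<rho> \<tau> * sg \<rho> \<tau> = 1"
  unfolding sg_def by (simp flip: power_mult_distrib)

lemma ncov_partial: "\<tau> \<in> Delta n \<Longrightarrow> \<not> cov n \<tau> \<Longrightarrow> \<tau> \<in> partial_Delta n"
  unfolding partial_Delta_def cov_def by auto

lemma Delta_fin: "\<sigma> \<in> Delta n \<Longrightarrow> finite \<sigma>"
  unfolding Delta_def using finite_cube finite_subset by blast

lemma Delta_sub: "\<rho> \<in> Delta n \<Longrightarrow> \<tau> \<subseteq> \<rho> \<Longrightarrow> \<tau> \<noteq> {} \<Longrightarrow> \<tau> \<in> Delta n"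
  unfolding Delta_def by blast

theorem mainTheorem16:
  fixes n p :: nat and c :: "bool list set \<Rightarrow> int"
  assumes "n \<ge> 5" and "p \<le> n - 2"
    and "is_cycle (Delta n) p c"
  shows "\<exists>c'. is_cycle (Delta n) p c' \<and>
              (\<forall>\<sigma>. c' \<sigma> \<noteq> 0 \<longrightarrow> \<sigma> \<in> partial_Delta n) \<and>
              homologous (Delta n) p c c'"
proof -
  have finc: "finite {\<sigma>. c \<sigma> \<noteq> 0}" and supc: "\<And>\<sigma>. c \<sigma> \<noteq> 0 \<Longrightarrow> \<sigma> \<in> Delta n \<and> card \<sigma> = p + 1"
    and cyc: "bd c = (\<lambda>_. 0)"
    using assms(3) unfolding is_cycle_def is_chain_def by auto
  define S where "S = {\<sigma>. c \<sigma> \<noteq> 0 \<and> cov n \<sigma>}"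
  have finS: "finite S" using finc unfolding S_def by (rule rev_finite_subset) auto
  define P where "P \<sigma> w = (length w = n \<and> w \<notin> \<sigma> \<and> insert w \<sigma> \<in> Delta n \<and> (\<forall>y\<in>\<sigma>. \<not> cov n (insert w \<sigma> - {y})))" for \<sigma> w
  have exP: "\<exists>w. P \<sigma> w" if "\<sigma> \<in> S" for \<sigma>
  proof -
    have "\<sigma> \<in> Delta n" "card \<sigma> = p + 1" "cov n \<sigma>" using that supc unfolding S_def by auto
    moreover have "card \<sigma> \<le> n - 1" using \<open>card \<sigma> = p + 1\<close> assms(1,2) by simp
    ultimately show ?thesis using cone_exists[OF assms(1)] unfolding P_def by blast
  qed
  define W where "W \<sigma> = (SOME w. P \<sigma> w)" for \<sigma>
  have W: "P \<sigma> (W \<sigma>)" if "\<sigma> \<in> S" for \<sigma> using someI_ex[OF exP[OF that]] unfolding W_def .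
  define cone where "cone \<sigma> = insert (W \<sigma>) \<sigma>" for \<sigma>
  have Sprops: "\<sigma> \<in> Delta n \<and> card \<sigma> = p + 1 \<and> cov n \<sigma> \<and> c \<sigma> \<noteq> 0 \<and> finite \<sigma>" if "\<sigma> \<in> S" for \<sigma>
    using that supc Delta_fin unfolding S_def by blast
  have coneD: "cone \<sigma> \<in> Delta n" and conecard: "card (cone \<sigma>) = p + 2" and conefin: "finite (cone \<sigma>)"
    and Wn: "W \<sigma> \<notin> \<sigma>" and Wf: "\<forall>y\<in>\<sigma>. \<not> cov n (cone \<sigma> - {y})"
    if "\<sigma> \<in> S" for \<sigma>
    using W[OF that] Sprops[OF that] unfolding P_def cone_def by auto
  have facet: "\<tau> = \<sigma>" if "\<sigma> \<in> S" "cov n \<tau>" "\<tau> \<subseteq> cone \<sigma>" "card (cone \<sigma>) = card \<tau> + 1" for \<sigma> \<tau>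
  proof -
    have fin: "finite (cone \<sigma>)" using conefin[OF that(1)] .
    have ft: "finite \<tau>" using fin that(3) finite_subset by blast
    have "card (cone \<sigma> - \<tau>) = 1" using card_Diff_subset[OF ft that(3)] that(4) by simp
    then obtain y where y: "cone \<sigma> - \<tau> = {y}" by (auto simp: card_Suc_eq)
    then have teq: "\<tau> = cone \<sigma> - {y}" using that(3) by auto
    show ?thesis
    proof (cases "y = W \<sigma>")
      case True then show ?thesis using teq Wn[OF that(1)] unfolding cone_def by auto
    next
      case False
      then have "y \<in> \<sigma>" using y unfolding cone_def by auto
      then show ?thesis using Wf[OF that(1)] teq that(2) by auto
    qed
  qed
  define d where "d \<rho> = (\<Sum>\<sigma>\<in>{\<sigma>\<in>S. cone \<sigma> = \<rho>}. sg (cone \<sigma>) \<sigma> * c \<sigma>)" for \<rho>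
  have dsupp: "\<exists>\<sigma>\<in>S. cone \<sigma> = \<rho>" if "d \<rho> \<noteq> 0" for \<rho>
  proof (rule ccontr)
    assume "\<not> ?thesis"
    then have e: "{\<sigma>\<in>S. cone \<sigma> = \<rho>} = {}" by auto
    show False using that unfolding d_def e by simp
  qed
  have dcone: "d (cone \<sigma>) = sg (cone \<sigma>) \<sigma> * c \<sigma>" if s: "\<sigma> \<in> S" for \<sigma>
  proof -
    have "{\<sigma>'\<in>S. cone \<sigma>' = cone \<sigma>} = {\<sigma>}"
    proof
      show "{\<sigma>'\<in>S. cone \<sigma>' = cone \<sigma>} \<subseteq> {\<sigma>}"
      proof
        fix \<sigma>' assume "\<sigma>' \<in> {\<sigma>'\<in>S. cone \<sigma>' = cone \<sigma>}"
        then have s': "\<sigma>' \<in> S" and eq: "cone \<sigma>' = cone \<sigma>" by auto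
        have "\<sigma> = \<sigma>'"
        proof (rule facet[OF s'])
          show "cov n \<sigma>" using Sprops[OF s] by simp
          show "\<sigma> \<subseteq> cone \<sigma>'" using eq unfolding cone_def by auto
          show "card (cone \<sigma>') = card \<sigma> + 1" using conecard[OF s'] Sprops[OF s] by simp
        qed
        then show "\<sigma>' \<in> {\<sigma>}" by simp
      qed
      show "{\<sigma>} \<subseteq> {\<sigma>'\<in>S. cone \<sigma>' = cone \<sigma>}" using s by simp
    qed
    then show ?thesis unfolding d_def by simp
  qed
  have supd: "{\<rho>. d \<rho> \<noteq> 0} \<subseteq> cone ` S" using dsupp by blast
  have find: "finite {\<rho>. d \<rho> \<noteq> 0}" using supd finS finite_subset by blast
  have dchain: "is_chain (Delta n) (p + 1) d"
    unfolding is_chain_def using find dsupp coneD conecard by fastforce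
  have dprops: "\<rho> \<in> Delta n \<and> finite \<rho> \<and> card \<rho> = p + 2" if "d \<rho> \<noteq> 0" for \<rho>
    using dsupp[OF that] coneD conecard conefin by blast
  have bdd_props: "\<tau> \<in> Delta n \<and> card \<tau> = p + 1" if nzb: "bd d \<tau> \<noteq> 0" for \<tau>
  proof -
    obtain \<rho> where r: "d \<rho> \<noteq> 0" "\<tau> \<subseteq> \<rho>" "card \<rho> = card \<tau> + 1" and ne: "\<tau> \<noteq> {}"
      using bd_nz[OF nzb] by blast
    show ?thesis using dprops[OF r(1)] r ne Delta_sub by auto
  qed
  have finbdd: "finite {\<tau>. bd d \<tau> \<noteq> 0}"
  proof -
    have "{\<tau>. bd d \<tau> \<noteq> 0} \<subseteq> (\<Union>\<rho>\<in>{\<rho>. d \<rho> \<noteq> 0}. Pow \<rho>)"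
      using bd_nz[of d] by blast
    moreover have "finite (\<Union>\<rho>\<in>{\<rho>. d \<rho> \<noteq> 0}. Pow \<rho>)" using find dprops by auto
    ultimately show ?thesis using finite_subset by blast
  qed
  define c' where "c' = (\<lambda>\<tau>. c \<tau> - bd d \<tau>)"
  have c'chain: "is_chain (Delta n) p c'"
  proof -
    have "{\<tau>. c' \<tau> \<noteq> 0} \<subseteq> {\<tau>. c \<tau> \<noteq> 0} \<union> {\<tau>. bd d \<tau> \<noteq> 0}" unfolding c'_def by auto
    then have "finite {\<tau>. c' \<tau> \<noteq> 0}" using finc finbdd finite_subset by blast
    moreover have "\<tau> \<in> Delta n \<and> card \<tau> = p + 1" if "c' \<tau> \<noteq> 0" for \<tau>
    proof (cases "c \<tau> = 0")
      case True
      then have "bd d \<tau> \<noteq> 0" using that unfolding c'_def by simp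
      then show ?thesis using bdd_props by blast
    next
      case False then show ?thesis using supc by blast
    qed
    ultimately show ?thesis unfolding is_chain_def by blast
  qed
  have c'cyc: "bd c' = (\<lambda>_. 0)"
  proof
    fix \<tau>
    have "bd c' \<tau> = bd c \<tau> - bd (bd d) \<tau>" unfolding c'_def by (rule bd_diff[OF finc finbdd])
    also have "bd (bd d) \<tau> = 0"
      by (rule bdbd[OF find]) (use dprops in \<open>auto simp: Delta_def\<close>)
    finally show "bd c' \<tau> = 0" using cyc by simp
  qed
  have only: "\<rho> = cone \<tau> \<and> \<tau> \<in> S" if cv: "cov n \<tau>" and dr: "d \<rho> \<noteq> 0" and fr: "ff \<tau> \<rho> \<noteq> 0" for \<tau> \<rho>
  proof -
    obtain \<sigma> where s: "\<sigma> \<in> S" "cone \<sigma> = \<rho>" using dsupp[OF dr] by blast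
    have "\<tau> \<subseteq> \<rho>" "card \<rho> = card \<tau> + 1" using fr unfolding ff_def by (auto split: if_splits)
    then have "\<tau> = \<sigma>" using facet[OF s(1) cv] s(2) by blast
    then show ?thesis using s by simp
  qed
  have part: "\<tau> \<in> partial_Delta n" if nz: "c' \<tau> \<noteq> 0" for \<tau>
  proof -
    have tD: "\<tau> \<in> Delta n" using c'chain nz unfolding is_chain_def by blast
    have "\<not> cov n \<tau>"
    proof
      assume cv: "cov n \<tau>"
      have tne: "\<tau> \<noteq> {}" using covD[OF cv, of 0] assms(1) by auto
      show False
      proof (cases "\<tau> \<in> S")
        case True
        let ?F = "insert (cone \<tau>) {\<rho>. d \<rho> \<noteq> 0}"
        have fF: "finite ?F" using find by simp
        have "bd d \<tau> = (\<Sum>\<rho>\<in>?F. ff \<tau> \<rho> * d \<rho>)" using bd_alt[OF fF, of d \<tau>] tne by auto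
        also have "\<dots> = ff \<tau> (cone \<tau>) * d (cone \<tau>)"
          by (rule sum_single_nz[OF fF]) (use only[OF cv] in auto)
        also have "ff \<tau> (cone \<tau>) = sg (cone \<tau>) \<tau>"
          using conefin[OF True] conecard[OF True] Sprops[OF True] unfolding ff_def cone_def by auto
        also have "d (cone \<tau>) = sg (cone \<tau>) \<tau> * c \<tau>" by (rule dcone[OF True])
        finally have "bd d \<tau> = c \<tau>" using sg_sq by (metis mult.assoc mult_1)
        then show False using nz unfolding c'_def by simp
      next
        case False
        then have c0: "c \<tau> = 0" using cv unfolding S_def by auto
        have "bd d \<tau> = (\<Sum>\<rho>\<in>{\<rho>. d \<rho> \<noteq> 0}. ff \<tau> \<rho> * d \<rho>)" using bd_alt[OF find, of d \<tau>] tne by auto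
        also have "\<dots> = 0" using only[OF cv] False by (intro sum.neutral) auto
        finally show False using nz c0 unfolding c'_def by simp
      qed
    qed
    then show ?thesis using ncov_partial tD by blast
  qed
  have hom: "homologous (Delta n) p c c'"
    unfolding homologous_def c'_def using dchain by auto
  show ?thesis using c'chain c'cyc part hom unfolding is_cycle_def by blast
qed


end
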